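(* For the finite-alphabet cognitive MAC $P_{Y|X_1,X_2}$ with the matched metric $q(x_1,x_2,y)=\log P_{Y|X_1,X_2}(y|x_1,x_2)$, one has $\mathcal R^{sup}_{cog}=\mathcal R^{bin}_{cog}=\mathcal R^{match}_{cog}$, where $$\mathcal R^{match}_{cog}=\bigcup_{P_{X_1,X_2}}\{(R_1,R_2): R_2\le I_P(X_2;Y|X_1),\ R_1+R_2\le I_P(X_1,X_2;Y)\},\quad P=P_{X_1,X_2}P_{Y|X_1,X_2};$$ $\mathcal R^{sup}_{cog}$ is the closure of the convex hull of $\bigcup_P\tilde{\mathcal R}^{sup}_{cog}(P)$ with $\tilde{\mathcal R}^{sup}_{cog}(P)=\{(R_1,R_2):R_2\le\min_{\tilde P\in\mathcal L_2(P)}I_{\tilde P}(X_2;Y|X_1),\ R_1+R_2\le\min_{\tilde P\in\mathcal L_0(P):I_{\tilde P}(X_1;Y)\le R_1}I_{\tilde P}(X_1,X_2;Y)\}$; and $\mathcal R^{bin}_{cog}$ is the closure of the convex hull of $\bigcup_P\mathcal R^{bin,*}_{cog}(P)$, $\mathcal R^{bin,*}_{cog}(P)$ being the set of $(R_1,R_2)$ for which there exist $R_{1,a},R_{1,b}\ge0$ with $R_1=R_{1,a}+R_{1,b}$, $R_{1,a}\le R_1'(P)$, $R_{1,b}+R_2\le R_2'(P)$, and either $R_{1,a}\le R_1''(P,R_{1,b}+R_2)$ or $R_{1,b}+R_2\le R_2''(P,R_{1,a})$ (all unions over $P=P_{X_1,X_2}P_{Y|X_1,X_2}$).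
   Context: For a distribution $Q$ on $\mathcal X_1\times\mathcal X_2\times\mathcal Y$: $\mathcal G_q(Q)=\{f: f_{X_1,X_2}=Q_{X_1,X_2},\ \mathbb E_f q(X_1,X_2,Y)\ge\mathbb E_Q q(X_1,X_2,Y)\}$; $\mathcal L_1(Q)=\{f\in\mathcal G_q(Q):f_{X_2,Y}=Q_{X_2,Y}\}$; $\mathcal L_2(Q)=\{f\in\mathcal G_q(Q):f_{X_1,Y}=Q_{X_1,Y}\}$; $\mathcal L_0(Q)=\{f\in\mathcal G_q(Q):f_Y=Q_Y\}$. $R_1'(P)=\min_{\tilde P\in\mathcal L_1(P)}I_{\tilde P}(X_1;Y,X_2)$; $R_2'(P)=\min_{\tilde P\in\mathcal L_2(P)}I_{\tilde P}(X_2;Y|X_1)$; $R_1''(P,R_2)=\min_{\tilde P\in\mathcal L_0(P)}[I_{\tilde P}(X_1;Y)+|I_{\tilde P}(X_2;Y|X_1)-R_2|^+]$; $R_2''(P,R_1)=\min_{\tilde P\in\mathcal L_0(P)}[I_{\tilde P}(X_2;Y)-I_{\tilde P}(X_2;X_1)+|I_{\tilde P}(X_1;Y,X_2)-R_1|^+]$; $|t|^+=\max\{0,t\}$. *)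

theory Defs
  imports "HOL-Analysis.Analysis"
begin

text \<open>Finite alphabets are finite types: X1 :: 'a, X2 :: 'b, Y :: 'c.
  Information quantities are in nats (natural log); metrics are ereal-valued
  so that the matched metric log W can take the value -infinity.\<close>

definition is_pmf2 :: "('a::finite \<Rightarrow> 'b::finite \<Rightarrow> real) \<Rightarrow> bool" where
  "is_pmf2 p \<longleftrightarrow> (\<forall>x1 x2. 0 \<le> p x1 x2) \<and> (\<Sum>x1\<in>UNIV. \<Sum>x2\<in>UNIV. p x1 x2) = 1"

definition is_pmf3 :: "('a::finite \<Rightarrow> 'b::finite \<Rightarrow> 'c::finite \<Rightarrow> real) \<Rightarrow> bool" where
  "is_pmf3 f \<longleftrightarrow> (\<forall>x1 x2 y. 0 \<le> f x1 x2 y) \<and> (\<Sum>x1\<in>UNIV. \<Sum>x2\<in>UNIV. \<Sum>y\<in>UNIV. f x1 x2 y) = 1"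

definition is_channel :: "('a::finite \<Rightarrow> 'b::finite \<Rightarrow> 'c::finite \<Rightarrow> real) \<Rightarrow> bool" where
  "is_channel W \<longleftrightarrow> (\<forall>x1 x2 y. 0 \<le> W x1 x2 y) \<and> (\<forall>x1 x2. (\<Sum>y\<in>UNIV. W x1 x2 y) = 1)"

definition joint :: "('a::finite \<Rightarrow> 'b::finite \<Rightarrow> real) \<Rightarrow> ('a \<Rightarrow> 'b \<Rightarrow> 'c::finite \<Rightarrow> real)
    \<Rightarrow> 'a \<Rightarrow> 'b \<Rightarrow> 'c \<Rightarrow> real" where
  "joint PX W = (\<lambda>x1 x2 y. PX x1 x2 * W x1 x2 y)"

definition m12 :: "('a::finite \<Rightarrow> 'b::finite \<Rightarrow> 'c::finite \<Rightarrow> real) \<Rightarrow> 'a \<Rightarrow> 'b \<Rightarrow> real" where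
  "m12 f x1 x2 = (\<Sum>y\<in>UNIV. f x1 x2 y)"
definition m13 :: "('a::finite \<Rightarrow> 'b::finite \<Rightarrow> 'c::finite \<Rightarrow> real) \<Rightarrow> 'a \<Rightarrow> 'c \<Rightarrow> real" where
  "m13 f x1 y = (\<Sum>x2\<in>UNIV. f x1 x2 y)"
definition m23 :: "('a::finite \<Rightarrow> 'b::finite \<Rightarrow> 'c::finite \<Rightarrow> real) \<Rightarrow> 'b \<Rightarrow> 'c \<Rightarrow> real" where
  "m23 f x2 y = (\<Sum>x1\<in>UNIV. f x1 x2 y)"
definition m1 :: "('a::finite \<Rightarrow> 'b::finite \<Rightarrow> 'c::finite \<Rightarrow> real) \<Rightarrow> 'a \<Rightarrow> real" where
  "m1 f x1 = (\<Sum>x2\<in>UNIV. \<Sum>y\<in>UNIV. f x1 x2 y)"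
definition m3 :: "('a::finite \<Rightarrow> 'b::finite \<Rightarrow> 'c::finite \<Rightarrow> real) \<Rightarrow> 'c \<Rightarrow> real" where
  "m3 f y = (\<Sum>x1\<in>UNIV. \<Sum>x2\<in>UNIV. f x1 x2 y)"

text \<open>Expectation of a metric q under f (ereal; 0 * -inf = 0).\<close>
definition expect :: "('a::finite \<Rightarrow> 'b::finite \<Rightarrow> 'c::finite \<Rightarrow> ereal)
    \<Rightarrow> ('a \<Rightarrow> 'b \<Rightarrow> 'c \<Rightarrow> real) \<Rightarrow> ereal" where
  "expect q f = (\<Sum>x1\<in>UNIV. \<Sum>x2\<in>UNIV. \<Sum>y\<in>UNIV. ereal (f x1 x2 y) * q x1 x2 y)"

definition qmatch :: "('a \<Rightarrow> 'b \<Rightarrow> 'c \<Rightarrow> real) \<Rightarrow> 'a \<Rightarrow> 'b \<Rightarrow> 'c \<Rightarrow> ereal" where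
  "qmatch W x1 x2 y = (if 0 < W x1 x2 y then ereal (ln (W x1 x2 y)) else -\<infinity>)"

definition Gq :: "('a::finite \<Rightarrow> 'b::finite \<Rightarrow> 'c::finite \<Rightarrow> ereal)
    \<Rightarrow> ('a \<Rightarrow> 'b \<Rightarrow> 'c \<Rightarrow> real) \<Rightarrow> ('a \<Rightarrow> 'b \<Rightarrow> 'c \<Rightarrow> real) set" where
  "Gq q Q = {f. is_pmf3 f \<and> m12 f = m12 Q \<and> expect q f \<ge> expect q Q}"

definition L1 where "L1 q Q = {f \<in> Gq q Q. m23 f = m23 Q}"
definition L2 where "L2 q Q = {f \<in> Gq q Q. m13 f = m13 Q}"
definition L0 where "L0 q Q = {f \<in> Gq q Q. m3 f = m3 Q}"

definition mi :: "('u::finite \<Rightarrow> 'v::finite \<Rightarrow> real) \<Rightarrow> real" where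
  "mi g = (\<Sum>u\<in>UNIV. \<Sum>v\<in>UNIV. if 0 < g u v
      then g u v * ln (g u v / ((\<Sum>v'\<in>UNIV. g u v') * (\<Sum>u'\<in>UNIV. g u' v))) else 0)"

definition I_X1_YX2 :: "('a::finite \<Rightarrow> 'b::finite \<Rightarrow> 'c::finite \<Rightarrow> real) \<Rightarrow> real" where
  "I_X1_YX2 f = mi (\<lambda>x1 (p::'b\<times>'c). f x1 (fst p) (snd p))"
definition I_X12_Y :: "('a::finite \<Rightarrow> 'b::finite \<Rightarrow> 'c::finite \<Rightarrow> real) \<Rightarrow> real" where
  "I_X12_Y f = mi (\<lambda>(p::'a\<times>'b) y. f (fst p) (snd p) y)"
definition I_X1_Y :: "('a::finite \<Rightarrow> 'b::finite \<Rightarrow> 'c::finite \<Rightarrow> real) \<Rightarrow> real" where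
  "I_X1_Y f = mi (m13 f)"
definition I_X2_Y :: "('a::finite \<Rightarrow> 'b::finite \<Rightarrow> 'c::finite \<Rightarrow> real) \<Rightarrow> real" where
  "I_X2_Y f = mi (m23 f)"
definition I_X2_X1 :: "('a::finite \<Rightarrow> 'b::finite \<Rightarrow> 'c::finite \<Rightarrow> real) \<Rightarrow> real" where
  "I_X2_X1 f = mi (\<lambda>x2 x1. m12 f x1 x2)"
definition I_X2_Y_X1 :: "('a::finite \<Rightarrow> 'b::finite \<Rightarrow> 'c::finite \<Rightarrow> real) \<Rightarrow> real" where
  "I_X2_Y_X1 f = (\<Sum>x1\<in>UNIV. \<Sum>x2\<in>UNIV. \<Sum>y\<in>UNIV. if 0 < f x1 x2 y
      then f x1 x2 y * ln (f x1 x2 y * m1 f x1 / (m12 f x1 x2 * m13 f x1 y)) else 0)"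

text \<open>Minima are taken as infima in ereal (inf of empty set = +infinity).\<close>
definition R1' where "R1' q P = (INF f\<in>L1 q P. ereal (I_X1_YX2 f))"
definition R2' where "R2' q P = (INF f\<in>L2 q P. ereal (I_X2_Y_X1 f))"
definition R1'' where "R1'' q P R2 =
  (INF f\<in>L0 q P. ereal (I_X1_Y f + max 0 (I_X2_Y_X1 f - R2)))"
definition R2'' where "R2'' q P R1 =
  (INF f\<in>L0 q P. ereal (I_X2_Y f - I_X2_X1 f + max 0 (I_X1_YX2 f - R1)))"

definition R_match :: "('a::finite \<Rightarrow> 'b::finite \<Rightarrow> 'c::finite \<Rightarrow> real) \<Rightarrow> (real \<times> real) set" where
  "R_match W = (\<Union>PX\<in>{PX. is_pmf2 PX}. {(R1, R2). 0 \<le> R1 \<and> 0 \<le> R2 \<and>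
      R2 \<le> I_X2_Y_X1 (joint PX W) \<and> R1 + R2 \<le> I_X12_Y (joint PX W)})"

definition Rsup_tilde :: "('a::finite \<Rightarrow> 'b::finite \<Rightarrow> 'c::finite \<Rightarrow> ereal)
    \<Rightarrow> ('a \<Rightarrow> 'b \<Rightarrow> 'c \<Rightarrow> real) \<Rightarrow> (real \<times> real) set" where
  "Rsup_tilde q P = {(R1, R2). 0 \<le> R1 \<and> 0 \<le> R2 \<and>
      ereal R2 \<le> (INF f\<in>L2 q P. ereal (I_X2_Y_X1 f)) \<and>
      ereal (R1 + R2) \<le> (INF f\<in>{f \<in> L0 q P. I_X1_Y f \<le> R1}. ereal (I_X12_Y f))}"

definition R_sup :: "('a::finite \<Rightarrow> 'b::finite \<Rightarrow> 'c::finite \<Rightarrow> ereal)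
    \<Rightarrow> ('a \<Rightarrow> 'b \<Rightarrow> 'c \<Rightarrow> real) \<Rightarrow> (real \<times> real) set" where
  "R_sup q W = closure (convex hull (\<Union>PX\<in>{PX. is_pmf2 PX}. Rsup_tilde q (joint PX W)))"

definition Rbin_star :: "('a::finite \<Rightarrow> 'b::finite \<Rightarrow> 'c::finite \<Rightarrow> ereal)
    \<Rightarrow> ('a \<Rightarrow> 'b \<Rightarrow> 'c \<Rightarrow> real) \<Rightarrow> (real \<times> real) set" where
  "Rbin_star q P = {(R1, R2). 0 \<le> R1 \<and> 0 \<le> R2 \<and>
      (\<exists>R1a R1b. 0 \<le> R1a \<and> 0 \<le> R1b \<and> R1 = R1a + R1b \<and>
         ereal R1a \<le> R1' q P \<and> ereal (R1b + R2) \<le> R2' q P \<and>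
         (ereal R1a \<le> R1'' q P (R1b + R2) \<or> ereal (R1b + R2) \<le> R2'' q P R1a))}"

definition R_bin :: "('a::finite \<Rightarrow> 'b::finite \<Rightarrow> 'c::finite \<Rightarrow> ereal)
    \<Rightarrow> ('a \<Rightarrow> 'b \<Rightarrow> 'c \<Rightarrow> real) \<Rightarrow> (real \<times> real) set" where
  "R_bin q W = closure (convex hull (\<Union>PX\<in>{PX. is_pmf2 PX}. Rbin_star q (joint PX W)))"

end

theory Submission
  imports Defs "HOL-Real_Asymp.Real_Asymp"
begin


definition lg :: "real \<Rightarrow> real \<Rightarrow> real" where
  "lg a A = (if 0 < a then a * ln (a / A) else 0)"

lemma lg_lower:
  assumes "0 \<le> a" "0 \<le> A" "0 < a \<Longrightarrow> 0 < A" "0 < s" "0 < S"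
  shows "lg a A \<ge> a - A * s / S + a * ln (s / S)"
proof (cases "a > 0")
  case True
  hence A: "A > 0" using assms by auto
  have "ln (a * S / (A * s)) \<ge> 1 - 1/(a * S / (A * s))"
    using ln_le_minus_one[of "1 / (a * S / (A * s))"] True A assms by (simp add: ln_div)
  hence "a * ln (a * S / (A * s)) \<ge> a * (1 - (A * s) / (a * S))" using True
    by (simp add: mult_left_mono)
  also have "a * (1 - (A * s) / (a * S)) = a - A * s / S" using True assms by (simp add: field_simps)
  finally have 1: "a * ln (a * S / (A * s)) \<ge> a - A * s / S" .
  have e: "ln (a/A) = ln (a * S / (A * s)) + ln (s/S)"
    using True A assms by (simp add: ln_divide_pos ln_mult)
  have e2: "a * ln (a/A) = a * ln (a * S / (A * s)) + a * ln (s/S)"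
    by (simp only: e distrib_left)
  have "lg a A = a * ln (a/A)" using True by (simp add: lg_def)
  thus ?thesis using 1 e2 by linarith
next
  case False
  hence "a = 0" using assms by auto
  thus ?thesis using assms by (simp add: lg_def)
qed

lemma lg_sum:
  assumes "finite I" "\<And>i. i \<in> I \<Longrightarrow> 0 \<le> a i" "\<And>i. i \<in> I \<Longrightarrow> 0 \<le> A i"
    "\<And>i. i \<in> I \<Longrightarrow> 0 < a i \<Longrightarrow> 0 < A i"
  shows "lg (\<Sum>i\<in>I. a i) (\<Sum>i\<in>I. A i) \<le> (\<Sum>i\<in>I. lg (a i) (A i))"
proof (cases "(\<Sum>i\<in>I. a i) > 0")
  case False
  hence z: "\<forall>i\<in>I. a i = 0" using assms sum_nonneg_eq_0_iff[of I a] by (metis order_less_le sum_nonneg)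
  thus ?thesis using False by (simp add: lg_def)
next
  case True
  define s where "s = (\<Sum>i\<in>I. a i)"
  define S where "S = (\<Sum>i\<in>I. A i)"
  obtain j where j: "j \<in> I" "a j > 0" using True
    by (metis not_less order.refl sum_nonpos)
  have "A j \<le> S" unfolding S_def using assms j by (intro member_le_sum) auto
  hence S: "S > 0" using assms j by force
  have s: "s > 0" using True s_def by simp
  have "(\<Sum>i\<in>I. lg (a i) (A i)) \<ge> (\<Sum>i\<in>I. a i - A i * s / S + a i * ln (s / S))"
    by (intro sum_mono lg_lower) (use assms s S in auto)
  also have "(\<Sum>i\<in>I. a i - A i * s / S + a i * ln (s / S)) = s - S * s / S + s * ln (s/S)"
    unfolding s_def S_def by (simp add: sum.distrib sum_subtractf sum_distrib_right sum_divide_distrib)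
  also have "\<dots> = lg s S" using s S by (simp add: lg_def)
  finally show ?thesis unfolding s_def S_def by simp
qed

lemma lg_scale: "0 \<le> l \<Longrightarrow> lg (l * a) (l * A) = l * lg a A"
  by (cases "l = 0") (auto simp: lg_def zero_less_mult_iff)

lemma lg_two:
  assumes "0 \<le> a" "0 \<le> b" "0 \<le> A" "0 \<le> B" "0 < a \<Longrightarrow> 0 < A" "0 < b \<Longrightarrow> 0 < B"
  shows "lg (a + b) (A + B) \<le> lg a A + lg b B"
proof -
  have "lg (\<Sum>i\<in>{True,False}. if i then a else b) (\<Sum>i\<in>{True,False}. if i then A else B)
     \<le> (\<Sum>i\<in>{True,False}. lg (if i then a else b) (if i then A else B))"
    by (rule lg_sum) (use assms in auto)
  thus ?thesis by simp
qed

definition ent :: "real \<Rightarrow> real" where "ent x = (if 0 < x then x * ln x else 0)"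

lemma ent_eq: "0 \<le> x \<Longrightarrow> ent x = x * ln x"
  by (auto simp: ent_def)

lemma ent_lim0: "((\<lambda>x::real. x * ln x) \<longlongrightarrow> 0) (at_right 0)"
  by real_asymp

lemma isCont_ent: "isCont ent x"
proof -
  consider "x > 0" | "x < 0" | "x = 0" by linarith
  thus ?thesis
  proof cases
    case 1
    have c: "isCont (\<lambda>x. x * ln x) x" using 1 by (intro continuous_intros) auto
    have "\<forall>\<^sub>F y in nhds x. ent y = y * ln y"
      using eventually_nhds_in_open[of "{0<..}" x] 1 by (auto elim!: eventually_mono simp: ent_def)
    thus ?thesis using isCont_cong[of ent "\<lambda>y. y * ln y" x] c by simp
  next
    case 2
    have "\<forall>\<^sub>F y in nhds x. ent y = 0"
      using eventually_nhds_in_open[of "{..<0}" x] 2 by (auto elim!: eventually_mono simp: ent_def)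
    thus ?thesis using isCont_cong[of ent "\<lambda>_. 0" x] by simp
  next
    case 3
    have r: "(ent \<longlongrightarrow> 0) (at_right 0)"
      using ent_lim0 by (rule Lim_transform_eventually) (auto simp: ent_def eventually_at_right_less intro!: eventually_mono[OF eventually_at_right_less])
    have e: "eventually (\<lambda>x. x \<in> {-1<..<(0::real)}) (at_left 0)" by (rule eventually_at_left_real) simp
    have "eventually (\<lambda>x. ent x = 0) (at_left 0)" using e by (rule eventually_mono) (auto simp: ent_def)
    hence l: "(ent \<longlongrightarrow> 0) (at_left 0)" using tendsto_eventually[of ent 0] by simp
    have "(ent \<longlongrightarrow> 0) (at 0)" using r l by (simp add: filterlim_split_at)
    thus ?thesis using 3 by (simp add: isCont_def ent_def)
  qed
qed

lemma continuous_on_ent[continuous_intros]: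
  "continuous_on s f \<Longrightarrow> continuous_on s (\<lambda>x. ent (f x))"
  by (rule continuous_on_compose2[of UNIV ent]) (auto intro: continuous_at_imp_continuous_on isCont_ent)



lemma sum_UNIV_prod: "(\<Sum>p\<in>(UNIV::('a::finite\<times>'b::finite) set). F p) = (\<Sum>a\<in>UNIV. \<Sum>b\<in>UNIV. F (a,b))"
  by (subst sum.cartesian_product) (simp add: UNIV_Times_UNIV)

lemma le_sumI: fixes g :: "'a::finite \<Rightarrow> real" assumes "\<And>i. 0 \<le> g i" shows "g i \<le> (\<Sum>j\<in>(UNIV::'a::finite set). g j)"
  using member_le_sum[of i UNIV g] assms by auto

lemma pos_term: "0 \<le> g \<Longrightarrow> (if 0 < g then g * c else 0) = g * (c::real)"
  by auto

lemma mi_N: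
  fixes g :: "'u::finite \<Rightarrow> 'v::finite \<Rightarrow> real"
  assumes nn: "\<And>u v. 0 \<le> g u v"
  shows "mi g = (\<Sum>u\<in>UNIV. \<Sum>v\<in>UNIV. g u v * ln (g u v))
     - (\<Sum>u\<in>UNIV. (\<Sum>v\<in>UNIV. g u v) * ln (\<Sum>v\<in>UNIV. g u v))
     - (\<Sum>v\<in>UNIV. (\<Sum>u\<in>UNIV. g u v) * ln (\<Sum>u\<in>UNIV. g u v))"
proof -
  define r where "r u = (\<Sum>v\<in>UNIV. g u v)" for u
  define c where "c v = (\<Sum>u\<in>UNIV. g u v)" for v
  have rg: "g u v \<le> r u" for u v unfolding r_def by (rule le_sumI) (rule nn)
  have cg: "g u v \<le> c v" for u v unfolding c_def by (rule le_sumI[of "\<lambda>u. g u v"]) (rule nn)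
  have t: "(if 0 < g u v then g u v * ln (g u v / ((\<Sum>v'\<in>UNIV. g u v') * (\<Sum>u'\<in>UNIV. g u' v))) else 0)
      = g u v * ln (g u v) - g u v * ln (r u) - g u v * ln (c v)" for u v
  proof (cases "0 < g u v")
    case True
    hence "0 < r u" "0 < c v" using rg[of u v] cg[of u v] by linarith+
    thus ?thesis using True by (simp add: r_def[symmetric] c_def[symmetric] ln_divide_pos ln_mult algebra_simps)
  next
    case False
    hence "g u v = 0" using nn[of u v] by linarith
    thus ?thesis by simp
  qed
  have "mi g = (\<Sum>u\<in>UNIV. \<Sum>v\<in>UNIV. g u v * ln (g u v) - g u v * ln (r u) - g u v * ln (c v))"
    unfolding mi_def t ..
  also have "\<dots> = (\<Sum>u\<in>UNIV. \<Sum>v\<in>UNIV. g u v * ln (g u v)) - (\<Sum>u\<in>UNIV. \<Sum>v\<in>UNIV. g u v * ln (r u))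
       - (\<Sum>u\<in>UNIV. \<Sum>v\<in>UNIV. g u v * ln (c v))"
    by (simp add: sum_subtractf)
  also have "(\<Sum>u\<in>UNIV. \<Sum>v\<in>UNIV. g u v * ln (r u)) = (\<Sum>u\<in>UNIV. r u * ln (r u))"
    by (simp add: r_def sum_distrib_right)
  also have "(\<Sum>u\<in>UNIV. \<Sum>v\<in>UNIV. g u v * ln (c v)) = (\<Sum>v\<in>UNIV. c v * ln (c v))"
    by (subst sum.swap) (simp add: c_def sum_distrib_right)
  finally show ?thesis by (simp add: r_def c_def)
qed

definition m2 :: "('a::finite \<Rightarrow> 'b::finite \<Rightarrow> 'c::finite \<Rightarrow> real) \<Rightarrow> 'b \<Rightarrow> real" where
  "m2 f x2 = (\<Sum>x1\<in>UNIV. \<Sum>y\<in>UNIV. f x1 x2 y)"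

definition HF :: "('a::finite \<Rightarrow> 'b::finite \<Rightarrow> 'c::finite \<Rightarrow> real) \<Rightarrow> real" where
  "HF f = (\<Sum>x1\<in>UNIV. \<Sum>x2\<in>UNIV. \<Sum>y\<in>UNIV. f x1 x2 y * ln (f x1 x2 y))"

definition S12 where "S12 f = (\<Sum>x1\<in>UNIV. \<Sum>x2\<in>UNIV. m12 f x1 x2 * ln (m12 f x1 x2))"
definition S13 where "S13 f = (\<Sum>x1\<in>UNIV. \<Sum>y\<in>UNIV. m13 f x1 y * ln (m13 f x1 y))"
definition S23 where "S23 f = (\<Sum>x2\<in>UNIV. \<Sum>y\<in>UNIV. m23 f x2 y * ln (m23 f x2 y))"
definition S1 where "S1 f = (\<Sum>x1\<in>UNIV. m1 f x1 * ln (m1 f x1))"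
definition S2 where "S2 f = (\<Sum>x2\<in>UNIV. m2 f x2 * ln (m2 f x2))"
definition S3 where "S3 f = (\<Sum>y\<in>UNIV. m3 f y * ln (m3 f y))"

lemma m1_12: "m1 f x1 = (\<Sum>x2\<in>UNIV. m12 f x1 x2)" by (simp add: m1_def m12_def)
lemma m1_13: "m1 f x1 = (\<Sum>y\<in>UNIV. m13 f x1 y)" unfolding m1_def m13_def by (rule sum.swap)
lemma m3_13: "m3 f y = (\<Sum>x1\<in>UNIV. m13 f x1 y)" by (simp add: m3_def m13_def)
lemma m3_23: "m3 f y = (\<Sum>x2\<in>UNIV. m23 f x2 y)" unfolding m3_def m23_def by (rule sum.swap)
lemma m2_12: "m2 f x2 = (\<Sum>x1\<in>UNIV. m12 f x1 x2)" by (simp add: m2_def m12_def)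
lemma m2_23: "m2 f x2 = (\<Sum>y\<in>UNIV. m23 f x2 y)" unfolding m2_def m23_def by (rule sum.swap)

lemma E1: assumes "\<And>x1 x2 y. 0 \<le> f x1 x2 y"
  shows "I_X12_Y f = HF f - S12 f - S3 f"
  unfolding I_X12_Y_def
  by (subst mi_N) (auto simp: assms sum_UNIV_prod HF_def S12_def S3_def m12_def m3_def)

lemma m13_nn: "(\<And>x1 x2 y. 0 \<le> f x1 x2 y) \<Longrightarrow> 0 \<le> m13 f x1 y"
  by (simp add: m13_def sum_nonneg)
lemma m23_nn: "(\<And>x1 x2 y. 0 \<le> f x1 x2 y) \<Longrightarrow> 0 \<le> m23 f x2 y"
  by (simp add: m23_def sum_nonneg)
lemma m12_nn: "(\<And>x1 x2 y. 0 \<le> f x1 x2 y) \<Longrightarrow> 0 \<le> m12 f x1 x2"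
  by (simp add: m12_def sum_nonneg)

lemma E2: assumes "\<And>x1 x2 y. 0 \<le> f x1 x2 y"
  shows "I_X1_Y f = S13 f - S1 f - S3 f"
proof -
  have nn: "\<And>u v. 0 \<le> m13 f u v" by (rule m13_nn[OF assms])
  show ?thesis unfolding I_X1_Y_def mi_N[OF nn]
    by (simp add: S13_def S1_def S3_def m1_13[symmetric] m3_13[symmetric])
qed

lemma E4: assumes "\<And>x1 x2 y. 0 \<le> f x1 x2 y"
  shows "I_X1_YX2 f = HF f - S1 f - S23 f"
  unfolding I_X1_YX2_def
  by (subst mi_N) (auto simp: assms sum_UNIV_prod HF_def S1_def S23_def m1_def m23_def)

lemma E5: assumes "\<And>x1 x2 y. 0 \<le> f x1 x2 y"
  shows "I_X2_Y f = S23 f - S2 f - S3 f"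
proof -
  have nn: "\<And>u v. 0 \<le> m23 f u v" by (rule m23_nn[OF assms])
  show ?thesis unfolding I_X2_Y_def mi_N[OF nn]
    by (simp add: S23_def S2_def S3_def m2_23[symmetric] m3_23[symmetric])
qed

lemma E6: assumes "\<And>x1 x2 y. 0 \<le> f x1 x2 y"
  shows "I_X2_X1 f = S12 f - S2 f - S1 f"
proof -
  have nn: "\<And>u v. 0 \<le> m12 f v u" by (rule m12_nn[OF assms])
  have sw: "(\<Sum>x2\<in>UNIV. \<Sum>x1\<in>UNIV. m12 f x1 x2 * ln (m12 f x1 x2)) = S12 f"
    unfolding S12_def by (rule sum.swap)
  show ?thesis unfolding I_X2_X1_def mi_N[OF nn] sw
    by (simp add: S2_def S1_def m2_12[symmetric] m1_12[symmetric])
qed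



lemma E3: assumes nn: "\<And>x1 x2 y. 0 \<le> f x1 x2 y"
  shows "I_X2_Y_X1 f = HF f + S1 f - S12 f - S13 f"
proof -
  have m12g: "f x1 x2 y \<le> m12 f x1 x2" for x1 x2 y unfolding m12_def by (rule le_sumI) (rule nn)
  have m13g: "f x1 x2 y \<le> m13 f x1 y" for x1 x2 y unfolding m13_def by (rule le_sumI[of "\<lambda>x2. f x1 x2 y"]) (rule nn)
  have m1g: "m12 f x1 x2 \<le> m1 f x1" for x1 x2 unfolding m1_12
    by (rule le_sumI) (auto simp: m12_def intro!: sum_nonneg nn)
  have t: "(if 0 < f x1 x2 y then f x1 x2 y * ln (f x1 x2 y * m1 f x1 / (m12 f x1 x2 * m13 f x1 y)) else 0)
     = f x1 x2 y * ln (f x1 x2 y) + f x1 x2 y * ln (m1 f x1) - f x1 x2 y * ln (m12 f x1 x2)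
        - f x1 x2 y * ln (m13 f x1 y)" for x1 x2 y
  proof (cases "0 < f x1 x2 y")
    case True
    hence "0 < m12 f x1 x2" "0 < m13 f x1 y" "0 < m1 f x1"
      using m12g[of x1 x2 y] m13g[of x1 x2 y] m1g[of x1 x2] by linarith+
    thus ?thesis using True by (simp add: ln_divide_pos ln_mult algebra_simps)
  next
    case False
    hence "f x1 x2 y = 0" using nn[of x1 x2 y] by linarith
    thus ?thesis by simp
  qed
  have a: "(\<Sum>x1\<in>UNIV. \<Sum>x2\<in>UNIV. \<Sum>y\<in>UNIV. f x1 x2 y * ln (m1 f x1)) = S1 f"
    by (simp add: S1_def m1_def sum_distrib_right)
  have b: "(\<Sum>x1\<in>UNIV. \<Sum>x2\<in>UNIV. \<Sum>y\<in>UNIV. f x1 x2 y * ln (m12 f x1 x2)) = S12 f"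
    by (simp add: S12_def m12_def sum_distrib_right)
  have c: "(\<Sum>x1\<in>UNIV. \<Sum>x2\<in>UNIV. \<Sum>y\<in>UNIV. f x1 x2 y * ln (m13 f x1 y)) = S13 f"
    unfolding S13_def
    by (rule sum.cong[OF refl], subst sum.swap) (simp add: m13_def sum_distrib_right)
  show ?thesis unfolding I_X2_Y_X1_def t
    by (simp add: sum.distrib sum_subtractf a b c HF_def)
qed

lemma chain1: assumes "\<And>x1 x2 y. 0 \<le> f x1 x2 y"
  shows "I_X12_Y f = I_X1_Y f + I_X2_Y_X1 f"
  using E1[of f, OF assms] E2[of f, OF assms] E3[of f, OF assms] by simp

lemma chain2: assumes "\<And>x1 x2 y. 0 \<le> f x1 x2 y"
  shows "I_X2_Y f - I_X2_X1 f + I_X1_YX2 f = I_X12_Y f"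
  using E1[of f, OF assms] E4[of f, OF assms] E5[of f, OF assms] E6[of f, OF assms] by simp

lemma MIgen:
  fixes g :: "'u::finite \<Rightarrow> 'v::finite \<Rightarrow> real"
  assumes nn: "\<And>u v. 0 \<le> g u v"
  shows "(\<Sum>u\<in>UNIV. \<Sum>v\<in>UNIV. g u v * ln (g u v))
     - (\<Sum>u\<in>UNIV. (\<Sum>v\<in>UNIV. g u v) * ln (\<Sum>v\<in>UNIV. g u v))
     - (\<Sum>v\<in>UNIV. (\<Sum>u\<in>UNIV. g u v) * ln (\<Sum>u\<in>UNIV. g u v))
     + (\<Sum>u\<in>UNIV. \<Sum>v\<in>UNIV. g u v) * ln (\<Sum>u\<in>UNIV. \<Sum>v\<in>UNIV. g u v) \<ge> 0"
proof -
  define r where "r u = (\<Sum>v\<in>UNIV. g u v)" for u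
  define c where "c v = (\<Sum>u\<in>UNIV. g u v)" for v
  define t where "t = (\<Sum>u\<in>UNIV. \<Sum>v\<in>UNIV. g u v)"
  have rg: "g u v \<le> r u" for u v unfolding r_def by (rule le_sumI) (rule nn)
  have cg: "g u v \<le> c v" for u v unfolding c_def by (rule le_sumI[of "\<lambda>u. g u v"]) (rule nn)
  have rt: "r u \<le> t" for u unfolding t_def r_def[symmetric] by (rule le_sumI) (auto simp: r_def intro!: sum_nonneg nn)
  have ct: "t = (\<Sum>v\<in>UNIV. c v)" unfolding t_def c_def by (rule sum.swap)
  have r0: "0 \<le> r u" for u using rg[of u] nn by (meson order.trans)
  have c0: "0 \<le> c v" for v using cg[of _ v] nn by (meson order.trans)
  show ?thesis
  proof (cases "t = 0")
    case True
    hence "g u v = 0" for u v using rg[of u v] rt[of u] nn[of u v] by linarith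
    thus ?thesis by simp
  next
    case False
    hence tpos: "t > 0" using rt[of undefined] r0[of undefined] by linarith
    define h where "h u v = r u * c v / t" for u v
    have tr: "(\<Sum>u\<in>UNIV. r u) = t" unfolding t_def r_def ..
    have lgt: "lg (g u v) (h u v) = g u v * ln (g u v) - g u v * ln (r u) - g u v * ln (c v) + g u v * ln t" for u v
    proof (cases "0 < g u v")
      case True
      hence "0 < r u" "0 < c v" using rg[of u v] cg[of u v] by linarith+
      thus ?thesis using True tpos by (simp add: lg_def h_def ln_divide_pos ln_mult algebra_simps)
    next
      case False
      hence "g u v = 0" using nn[of u v] by linarith
      thus ?thesis by (simp add: lg_def)
    qed
    have sh: "(\<Sum>p\<in>UNIV. h (fst p) (snd p)) = t"
      unfolding sum_UNIV_prod h_def using tpos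
      by (simp add: sum_divide_distrib[symmetric] sum_distrib_left[symmetric] sum_distrib_right[symmetric] tr ct[symmetric])
    have sg: "(\<Sum>p\<in>UNIV. g (fst p) (snd p)) = t" unfolding sum_UNIV_prod t_def by simp
    have "lg (\<Sum>p\<in>UNIV. g (fst p) (snd p)) (\<Sum>p\<in>UNIV. h (fst p) (snd p))
        \<le> (\<Sum>p\<in>UNIV. lg (g (fst p) (snd p)) (h (fst p) (snd p)))"
    proof (rule lg_sum)
      fix p :: "'u \<times> 'v" assume "0 < g (fst p) (snd p)"
      thus "0 < h (fst p) (snd p)" unfolding h_def
        using rg[of "fst p" "snd p"] cg[of "fst p" "snd p"] tpos by simp
    qed (auto simp: nn h_def intro!: divide_nonneg_pos mult_nonneg_nonneg r0 c0 tpos)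
    hence "0 \<le> (\<Sum>p\<in>UNIV. lg (g (fst p) (snd p)) (h (fst p) (snd p)))"
      unfolding sh sg using tpos by (simp add: lg_def[of t t])
    also have "(\<Sum>p\<in>UNIV. lg (g (fst p) (snd p)) (h (fst p) (snd p)))
       = (\<Sum>u\<in>UNIV. \<Sum>v\<in>UNIV. g u v * ln (g u v)) - (\<Sum>u\<in>UNIV. \<Sum>v\<in>UNIV. g u v * ln (r u))
         - (\<Sum>u\<in>UNIV. \<Sum>v\<in>UNIV. g u v * ln (c v)) + (\<Sum>u\<in>UNIV. \<Sum>v\<in>UNIV. g u v * ln t)"
      unfolding sum_UNIV_prod lgt by (simp add: sum.distrib sum_subtractf)
    also have "(\<Sum>u\<in>UNIV. \<Sum>v\<in>UNIV. g u v * ln (r u)) = (\<Sum>u\<in>UNIV. r u * ln (r u))"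
      by (simp add: r_def sum_distrib_right)
    also have "(\<Sum>u\<in>UNIV. \<Sum>v\<in>UNIV. g u v * ln (c v)) = (\<Sum>v\<in>UNIV. c v * ln (c v))"
      by (subst sum.swap) (simp add: c_def sum_distrib_right)
    also have "(\<Sum>u\<in>UNIV. \<Sum>v\<in>UNIV. g u v * ln t) = t * ln t"
      by (simp add: t_def sum_distrib_right)
    finally show ?thesis by (simp add: r_def[symmetric] c_def[symmetric] t_def[symmetric] tr)
  qed
qed

lemma sum_pmf3: "is_pmf3 f \<Longrightarrow> (\<Sum>x1\<in>UNIV. m1 f x1) = 1"
  by (simp add: is_pmf3_def m1_def)

lemma X1_Y_nonneg: assumes "is_pmf3 f" shows "0 \<le> I_X1_Y f"
proof -
  have nn: "\<And>x1 x2 y. 0 \<le> f x1 x2 y" using assms by (simp add: is_pmf3_def)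
  have mg: "0 \<le> (\<Sum>u\<in>UNIV. \<Sum>v\<in>UNIV. m13 f u v * ln (m13 f u v))
     - (\<Sum>u\<in>UNIV. (\<Sum>v\<in>UNIV. m13 f u v) * ln (\<Sum>v\<in>UNIV. m13 f u v))
     - (\<Sum>v\<in>UNIV. (\<Sum>u\<in>UNIV. m13 f u v) * ln (\<Sum>u\<in>UNIV. m13 f u v))
     + (\<Sum>u\<in>UNIV. \<Sum>v\<in>UNIV. m13 f u v) * ln (\<Sum>u\<in>UNIV. \<Sum>v\<in>UNIV. m13 f u v)"
    by (rule MIgen) (rule m13_nn[OF nn])
  hence "0 \<le> S13 f - S1 f - S3 f + 1 * ln 1"
    using sum_pmf3[OF assms] unfolding m1_13[symmetric] m3_13[symmetric] S13_def S1_def S3_def by simp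
  thus ?thesis using E2[of f, OF nn] by simp
qed

lemma X1_Y_le: assumes "\<And>x1 x2 y. 0 \<le> f x1 x2 y" shows "I_X1_Y f \<le> I_X1_YX2 f"
proof -
  have h1: "(\<Sum>y\<in>UNIV. \<Sum>x1\<in>UNIV. \<Sum>x2\<in>UNIV. f x1 x2 y * ln (f x1 x2 y)) = HF f"
    unfolding HF_def by (subst sum.swap) (rule sum.cong[OF refl], rule sum.swap)
  have h2: "(\<Sum>y\<in>UNIV. \<Sum>x1\<in>UNIV. m13 f x1 y * ln (m13 f x1 y)) = S13 f"
    unfolding S13_def by (rule sum.swap)
  have h3: "(\<Sum>y\<in>UNIV. \<Sum>x2\<in>UNIV. m23 f x2 y * ln (m23 f x2 y)) = S23 f"
    unfolding S23_def by (rule sum.swap)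
  have "0 \<le> (\<Sum>y\<in>UNIV. (\<Sum>x1\<in>UNIV. \<Sum>x2\<in>UNIV. f x1 x2 y * ln (f x1 x2 y))
     - (\<Sum>x1\<in>UNIV. m13 f x1 y * ln (m13 f x1 y))
     - (\<Sum>x2\<in>UNIV. m23 f x2 y * ln (m23 f x2 y))
     + m3 f y * ln (m3 f y))"
    by (rule sum_nonneg, use MIgen[of "\<lambda>x1 x2. f x1 x2 _"] assms in
        \<open>simp add: m13_def m23_def m3_def\<close>)
  also have "(\<Sum>y\<in>UNIV. (\<Sum>x1\<in>UNIV. \<Sum>x2\<in>UNIV. f x1 x2 y * ln (f x1 x2 y))
     - (\<Sum>x1\<in>UNIV. m13 f x1 y * ln (m13 f x1 y))
     - (\<Sum>x2\<in>UNIV. m23 f x2 y * ln (m23 f x2 y))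
     + m3 f y * ln (m3 f y)) = HF f - S13 f - S23 f + S3 f"
    by (simp only: sum.distrib sum_subtractf h1 h2 h3 S3_def)
  finally show ?thesis using E2[of f, OF assms] E4[of f, OF assms] by simp
qed



lemma joint_nn: "is_pmf2 PX \<Longrightarrow> is_channel W \<Longrightarrow> 0 \<le> joint PX W x1 x2 y"
  by (simp add: joint_def is_pmf2_def is_channel_def)

lemma m12_joint: "is_channel W \<Longrightarrow> m12 (joint PX W) = PX"
  by (rule ext)+ (simp add: m12_def joint_def is_channel_def sum_distrib_left[symmetric])

lemma joint_pmf3: assumes "is_pmf2 PX" "is_channel W" shows "is_pmf3 (joint PX W)"
proof -
  have "(\<Sum>x1\<in>UNIV. \<Sum>x2\<in>UNIV. \<Sum>y\<in>UNIV. joint PX W x1 x2 y) = (\<Sum>x1\<in>UNIV. \<Sum>x2\<in>UNIV. m12 (joint PX W) x1 x2)"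
    by (simp add: m12_def)
  also have "\<dots> = 1" using assms by (simp add: m12_joint is_pmf2_def)
  finally show ?thesis using joint_nn[OF assms] by (simp add: is_pmf3_def)
qed

lemma self_Gq: "is_pmf3 P \<Longrightarrow> P \<in> Gq q P" by (simp add: Gq_def)
lemma self_L0: "is_pmf3 P \<Longrightarrow> P \<in> L0 q P" by (simp add: L0_def Gq_def)
lemma self_L1: "is_pmf3 P \<Longrightarrow> P \<in> L1 q P" by (simp add: L1_def Gq_def)
lemma self_L2: "is_pmf3 P \<Longrightarrow> P \<in> L2 q P" by (simp add: L2_def Gq_def)

definition cW where "cW W x1 x2 = (\<Sum>y\<in>UNIV. W x1 x2 y * ln (W x1 x2 y))"

lemma N_mult: "0 \<le> p \<Longrightarrow> 0 \<le> w \<Longrightarrow> (p * w) * ln (p * w) = w * (p * ln p) + p * (w * ln (w::real))"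
  by (cases "p = 0 \<or> w = 0") (auto simp: ln_mult algebra_simps)

lemma HF_joint: assumes "is_pmf2 PX" "is_channel W"
  shows "HF (joint PX W) = (\<Sum>x1\<in>UNIV. \<Sum>x2\<in>UNIV. PX x1 x2 * ln (PX x1 x2))
     + (\<Sum>x1\<in>UNIV. \<Sum>x2\<in>UNIV. PX x1 x2 * cW W x1 x2)"
proof -
  have p: "0 \<le> PX x1 x2" "0 \<le> W x1 x2 y" "(\<Sum>y\<in>UNIV. W x1 x2 y) = 1" for x1 x2 y
    using assms by (auto simp: is_pmf2_def is_channel_def)
  show ?thesis
    unfolding HF_def joint_def
    by (simp add: N_mult p sum.distrib sum_distrib_left[symmetric] sum_distrib_right[symmetric] cW_def)
qed

lemma expect_joint: assumes "is_pmf2 PX" "is_channel W"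
  shows "expect (qmatch W) (joint PX W) = ereal (\<Sum>x1\<in>UNIV. \<Sum>x2\<in>UNIV. PX x1 x2 * cW W x1 x2)"
proof -
  have p: "0 \<le> W x1 x2 y" for x1 x2 y
    using assms by (auto simp: is_pmf2_def is_channel_def)
  have t: "ereal (joint PX W x1 x2 y) * qmatch W x1 x2 y = ereal (PX x1 x2 * (W x1 x2 y * ln (W x1 x2 y)))" for x1 x2 y
  proof (cases "0 < W x1 x2 y")
    case True thus ?thesis by (simp add: qmatch_def joint_def)
  next
    case False hence "W x1 x2 y = 0" using p[of x1 x2 y] by linarith
    thus ?thesis by (simp add: qmatch_def joint_def)
  qed
  show ?thesis unfolding expect_def t by (simp add: cW_def sum_distrib_left)
qed

lemma sum_inf_abs:
  fixes g :: "'a::finite \<Rightarrow> ereal"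
  assumes "\<bar>g i\<bar> = \<infinity>" shows "\<bar>(\<Sum>j\<in>UNIV. g j)\<bar> = \<infinity>"
proof -
  have "finite (UNIV::'a set) \<and> (\<exists>i\<in>UNIV. \<bar>g i\<bar> = \<infinity>)"
    using assms by (intro conjI bexI[of _ i]) simp_all
  thus ?thesis by (subst sum_Inf)
qed

lemma Gq_support:
  assumes "is_pmf2 PX" "is_channel W" and f: "f \<in> Gq (qmatch W) (joint PX W)"
  shows "\<And>x1 x2 y. 0 < f x1 x2 y \<Longrightarrow> 0 < W x1 x2 y"
    and "(\<Sum>x1\<in>UNIV. \<Sum>x2\<in>UNIV. PX x1 x2 * cW W x1 x2)
         \<le> (\<Sum>x1\<in>UNIV. \<Sum>x2\<in>UNIV. \<Sum>y\<in>UNIV. f x1 x2 y * ln (W x1 x2 y))"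
proof -
  have fn: "0 \<le> f x1 x2 y" for x1 x2 y using f by (simp add: Gq_def is_pmf3_def)
  have wn: "0 \<le> W x1 x2 y" for x1 x2 y using assms by (simp add: is_channel_def)
  define b where "b x1 x2 y = (if 0 < W x1 x2 y then f x1 x2 y * ln (W x1 x2 y) else 0)" for x1 x2 y
  have tb: "ereal (f x1 x2 y) * qmatch W x1 x2 y \<le> ereal (b x1 x2 y)" for x1 x2 y
    using fn[of x1 x2 y] by (cases "f x1 x2 y = 0") (auto simp: b_def qmatch_def)
  have ub: "expect (qmatch W) f \<le> ereal (\<Sum>x1\<in>UNIV. \<Sum>x2\<in>UNIV. \<Sum>y\<in>UNIV. b x1 x2 y)"
    unfolding expect_def sum_ereal[symmetric] by (intro sum_mono tb)
  have lb: "ereal (\<Sum>x1\<in>UNIV. \<Sum>x2\<in>UNIV. PX x1 x2 * cW W x1 x2) \<le> expect (qmatch W) f"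
    using f expect_joint[OF assms(1,2)] by (simp add: Gq_def)
  show sup: "0 < W x1 x2 y" if "0 < f x1 x2 y" for x1 x2 y
  proof (rule ccontr)
    assume "\<not> 0 < W x1 x2 y"
    hence t: "ereal (f x1 x2 y) * qmatch W x1 x2 y = -\<infinity>" using that by (simp add: qmatch_def)
    have "\<bar>expect (qmatch W) f\<bar> = \<infinity>" unfolding expect_def
      by (intro sum_inf_abs[of _ x1] sum_inf_abs[of _ x2] sum_inf_abs[of _ y]) (simp add: t)
    thus False using ub lb by auto
  qed
  have "ereal (f x1 x2 y) * qmatch W x1 x2 y = ereal (f x1 x2 y * ln (W x1 x2 y))" for x1 x2 y
  proof (cases "0 < W x1 x2 y")
    case True thus ?thesis by (simp add: qmatch_def)
  next
    case False hence "f x1 x2 y = 0" using sup fn[of x1 x2 y] by force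
    thus ?thesis by (simp add: zero_ereal_def[symmetric])
  qed
  hence "expect (qmatch W) f = ereal (\<Sum>x1\<in>UNIV. \<Sum>x2\<in>UNIV. \<Sum>y\<in>UNIV. f x1 x2 y * ln (W x1 x2 y))"
    unfolding expect_def by simp
  thus "(\<Sum>x1\<in>UNIV. \<Sum>x2\<in>UNIV. PX x1 x2 * cW W x1 x2)
         \<le> (\<Sum>x1\<in>UNIV. \<Sum>x2\<in>UNIV. \<Sum>y\<in>UNIV. f x1 x2 y * ln (W x1 x2 y))" using lb by simp
qed

lemma sum_UNIV_prod3: "(\<Sum>p\<in>(UNIV::('a::finite\<times>'b::finite\<times>'c::finite) set). F p)
   = (\<Sum>a\<in>UNIV. \<Sum>b\<in>UNIV. \<Sum>c\<in>UNIV. F (a,b,c))"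
  by (simp add: sum_UNIV_prod)

lemma gibbs:
  assumes px: "is_pmf2 PX" and w: "is_channel W" and f: "f \<in> Gq (qmatch W) (joint PX W)"
  shows "HF (joint PX W) \<le> HF f"
proof -
  have fn: "0 \<le> f x1 x2 y" for x1 x2 y using f by (simp add: Gq_def is_pmf3_def)
  have f1: "(\<Sum>x1\<in>UNIV. \<Sum>x2\<in>UNIV. \<Sum>y\<in>UNIV. f x1 x2 y) = 1" using f by (simp add: Gq_def is_pmf3_def)
  have m12f: "m12 f = PX" using f m12_joint[OF w] by (simp add: Gq_def)
  have wn: "0 \<le> W x1 x2 y" for x1 x2 y using w by (simp add: is_channel_def)
  have pn: "0 \<le> PX x1 x2" for x1 x2 using px by (simp add: is_pmf2_def)
  have j1: "(\<Sum>x1\<in>UNIV. \<Sum>x2\<in>UNIV. \<Sum>y\<in>UNIV. PX x1 x2 * W x1 x2 y) = 1"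
    using joint_pmf3[OF px w] by (simp add: is_pmf3_def joint_def)
  have fle: "f x1 x2 y \<le> PX x1 x2" for x1 x2 y
    unfolding m12f[symmetric] m12_def by (rule le_sumI) (rule fn)
  define a where "a p = f (fst p) (fst (snd p)) (snd (snd p))" for p
  define A where "A p = PX (fst p) (fst (snd p)) * W (fst p) (fst (snd p)) (snd (snd p))" for p
  have "lg (\<Sum>p\<in>UNIV. a p) (\<Sum>p\<in>UNIV. A p) \<le> (\<Sum>p\<in>UNIV. lg (a p) (A p))"
  proof (rule lg_sum)
    fix p assume "0 < a p"
    thus "0 < A p" unfolding a_def A_def
      using Gq_support(1)[OF px w f] fle[of "fst p" "fst (snd p)" "snd (snd p)"] by simp
  qed (auto simp: a_def A_def fn pn wn)
  also have "lg (\<Sum>p\<in>UNIV. a p) (\<Sum>p\<in>UNIV. A p) = 0"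
    unfolding sum_UNIV_prod3 a_def A_def by (simp add: f1 j1 lg_def)
  also have lgt: "lg (f x1 x2 y) (PX x1 x2 * W x1 x2 y)
      = f x1 x2 y * ln (f x1 x2 y) - f x1 x2 y * ln (PX x1 x2) - f x1 x2 y * ln (W x1 x2 y)" for x1 x2 y
  proof (cases "0 < f x1 x2 y")
    case True
    hence "0 < PX x1 x2" "0 < W x1 x2 y" using fle[of x1 x2 y] Gq_support(1)[OF px w f] by force+
    thus ?thesis using True by (simp add: lg_def ln_divide_pos ln_mult algebra_simps)
  next
    case False hence "f x1 x2 y = 0" using fn[of x1 x2 y] by linarith
    thus ?thesis by (simp add: lg_def)
  qed
  have "(\<Sum>p\<in>UNIV. lg (a p) (A p)) = HF f - (\<Sum>x1\<in>UNIV. \<Sum>x2\<in>UNIV. \<Sum>y\<in>UNIV. f x1 x2 y * ln (PX x1 x2))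
      - (\<Sum>x1\<in>UNIV. \<Sum>x2\<in>UNIV. \<Sum>y\<in>UNIV. f x1 x2 y * ln (W x1 x2 y))"
    unfolding sum_UNIV_prod3 a_def A_def by (simp add: lgt HF_def sum_subtractf)
  also have "(\<Sum>x1\<in>UNIV. \<Sum>x2\<in>UNIV. \<Sum>y\<in>UNIV. f x1 x2 y * ln (PX x1 x2))
      = (\<Sum>x1\<in>UNIV. \<Sum>x2\<in>UNIV. PX x1 x2 * ln (PX x1 x2))"
    unfolding m12f[symmetric] by (simp add: m12_def sum_distrib_right)
  finally show ?thesis using HF_joint[OF px w] Gq_support(2)[OF px w f] by linarith
qed



lemma ereal_trans: "ereal a \<le> X \<Longrightarrow> X \<le> ereal b \<Longrightarrow> a \<le> b"
  using order.trans ereal_less_eq(3) by metis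

lemma pmf3_nn: "is_pmf3 f \<Longrightarrow> 0 \<le> f x1 x2 y" by (simp add: is_pmf3_def)

lemma Gq_pmf3: "f \<in> Gq q P \<Longrightarrow> is_pmf3 f" by (simp add: Gq_def)
lemma Gq_m12: "f \<in> Gq q P \<Longrightarrow> m12 f = m12 P" by (simp add: Gq_def)

lemma lb2: assumes px: "is_pmf2 PX" and w: "is_channel W" and f: "f \<in> L2 (qmatch W) (joint PX W)"
  shows "I_X2_Y_X1 (joint PX W) \<le> I_X2_Y_X1 f"
proof -
  have g: "f \<in> Gq (qmatch W) (joint PX W)" and e13: "m13 f = m13 (joint PX W)" using f by (auto simp: L2_def)
  have e12: "m12 f = m12 (joint PX W)" using Gq_m12[OF g] .
  have "HF (joint PX W) \<le> HF f" by (rule gibbs[OF px w g])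
  moreover have "S1 f = S1 (joint PX W)" "S12 f = S12 (joint PX W)" "S13 f = S13 (joint PX W)"
    by (simp_all add: S1_def S12_def S13_def m1_13 e12 e13)
  ultimately show ?thesis
    using E3[of f] E3[of "joint PX W"] pmf3_nn[OF Gq_pmf3[OF g]] joint_nn[OF px w] by simp
qed

lemma lb1: assumes px: "is_pmf2 PX" and w: "is_channel W" and f: "f \<in> L1 (qmatch W) (joint PX W)"
  shows "I_X1_YX2 (joint PX W) \<le> I_X1_YX2 f"
proof -
  have g: "f \<in> Gq (qmatch W) (joint PX W)" and e23: "m23 f = m23 (joint PX W)" using f by (auto simp: L1_def)
  have e12: "m12 f = m12 (joint PX W)" using Gq_m12[OF g] .
  have "HF (joint PX W) \<le> HF f" by (rule gibbs[OF px w g])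
  moreover have "S1 f = S1 (joint PX W)" "S23 f = S23 (joint PX W)"
    by (simp_all add: S1_def S23_def m1_12 e12 e23)
  ultimately show ?thesis
    using E4[of f] E4[of "joint PX W"] pmf3_nn[OF Gq_pmf3[OF g]] joint_nn[OF px w] by simp
qed

lemma lb0: assumes px: "is_pmf2 PX" and w: "is_channel W" and f: "f \<in> L0 (qmatch W) (joint PX W)"
  shows "I_X12_Y (joint PX W) \<le> I_X12_Y f"
proof -
  have g: "f \<in> Gq (qmatch W) (joint PX W)" and e3: "m3 f = m3 (joint PX W)" using f by (auto simp: L0_def)
  have e12: "m12 f = m12 (joint PX W)" using Gq_m12[OF g] .
  have "HF (joint PX W) \<le> HF f" by (rule gibbs[OF px w g])
  moreover have "S12 f = S12 (joint PX W)" "S3 f = S3 (joint PX W)"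
    by (simp_all add: S12_def S3_def e12 e3)
  ultimately show ?thesis
    using E1[of f] E1[of "joint PX W"] pmf3_nn[OF Gq_pmf3[OF g]] joint_nn[OF px w] by simp
qed

definition matchset :: "('a::finite \<Rightarrow> 'b::finite \<Rightarrow> 'c::finite \<Rightarrow> real) \<Rightarrow> ('a \<Rightarrow> 'b \<Rightarrow> real) \<Rightarrow> (real \<times> real) set" where
  "matchset W PX = {(R1, R2). 0 \<le> R1 \<and> 0 \<le> R2 \<and>
      R2 \<le> I_X2_Y_X1 (joint PX W) \<and> R1 + R2 \<le> I_X12_Y (joint PX W)}"

lemma R_match_alt: "R_match W = (\<Union>PX\<in>{PX. is_pmf2 PX}. matchset W PX)"
  by (simp add: R_match_def matchset_def)

lemma sup_eq: assumes px: "is_pmf2 PX" and w: "is_channel W"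
  shows "Rsup_tilde (qmatch W) (joint PX W) = matchset W PX"
proof -
  let ?P = "joint PX W" and ?q = "qmatch W"
  have p3: "is_pmf3 ?P" by (rule joint_pmf3[OF px w])
  have nn: "\<And>x1 x2 y. 0 \<le> ?P x1 x2 y" by (rule joint_nn[OF px w])
  show ?thesis
  proof (intro equalityI subsetI)
    fix r assume r: "r \<in> Rsup_tilde ?q ?P"
    obtain R1 R2 where rr: "r = (R1, R2)" by (cases r)
    have a: "0 \<le> R1" "0 \<le> R2" and b: "ereal R2 \<le> (INF f\<in>L2 ?q ?P. ereal (I_X2_Y_X1 f))"
      and c: "ereal (R1 + R2) \<le> (INF f\<in>{f \<in> L0 ?q ?P. I_X1_Y f \<le> R1}. ereal (I_X12_Y f))"
      using r rr by (auto simp: Rsup_tilde_def)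
    have i_b: "(INF f\<in>L2 ?q ?P. ereal (I_X2_Y_X1 f)) \<le> ereal (I_X2_Y_X1 ?P)"
      by (rule INF_lower) (rule self_L2[OF p3])
    have r2: "R2 \<le> I_X2_Y_X1 ?P" using order.trans[OF b i_b] by (simp only: ereal_less_eq)
    have "R1 + R2 \<le> I_X12_Y ?P"
    proof (cases "I_X1_Y ?P \<le> R1")
      case True
      hence "(INF f\<in>{f \<in> L0 ?q ?P. I_X1_Y f \<le> R1}. ereal (I_X12_Y f)) \<le> ereal (I_X12_Y ?P)"
        by (intro INF_lower) (simp add: self_L0[OF p3])
      thus ?thesis using ereal_trans[OF c] by blast
    next
      case False thus ?thesis using r2 chain1[of "joint PX W", OF nn] by simp
    qed
    thus "r \<in> matchset W PX" using a r2 rr by (simp add: matchset_def)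
  next
    fix r assume r: "r \<in> matchset W PX"
    obtain R1 R2 where rr: "r = (R1, R2)" by (cases r)
    have a: "0 \<le> R1" "0 \<le> R2" "R2 \<le> I_X2_Y_X1 ?P" "R1 + R2 \<le> I_X12_Y ?P"
      using r rr by (auto simp: matchset_def)
    have "ereal R2 \<le> (INF f\<in>L2 ?q ?P. ereal (I_X2_Y_X1 f))"
      unfolding le_INF_iff using a(3) lb2[OF px w] by (auto intro: order.trans)
    moreover have "ereal (R1 + R2) \<le> (INF f\<in>{f \<in> L0 ?q ?P. I_X1_Y f \<le> R1}. ereal (I_X12_Y f))"
      unfolding le_INF_iff using a(4) lb0[OF px w] by (auto intro: order.trans)
    ultimately show "r \<in> Rsup_tilde ?q ?P" using a rr by (simp add: Rsup_tilde_def)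
  qed
qed

lemma bin_eq: assumes px: "is_pmf2 PX" and w: "is_channel W"
  shows "Rbin_star (qmatch W) (joint PX W) = matchset W PX"
proof -
  let ?P = "joint PX W" and ?q = "qmatch W"
  have p3: "is_pmf3 ?P" by (rule joint_pmf3[OF px w])
  have nn: "\<And>x1 x2 y. 0 \<le> ?P x1 x2 y" by (rule joint_nn[OF px w])
  show ?thesis
  proof (intro equalityI subsetI)
    fix r assume r: "r \<in> Rbin_star ?q ?P"
    obtain R1 R2 where rr: "r = (R1, R2)" by (cases r)
    from r rr obtain R1a R1b where a: "0 \<le> R1" "0 \<le> R2" "0 \<le> R1a" "0 \<le> R1b" "R1 = R1a + R1b"
      and b1: "ereal R1a \<le> R1' ?q ?P" and b2: "ereal (R1b + R2) \<le> R2' ?q ?P"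
      and c: "ereal R1a \<le> R1'' ?q ?P (R1b + R2) \<or> ereal (R1b + R2) \<le> R2'' ?q ?P R1a"
      by (auto simp: Rbin_star_def)
    have i_b2: "R2' ?q ?P \<le> ereal (I_X2_Y_X1 ?P)" unfolding R2'_def
      by (rule INF_lower) (rule self_L2[OF p3])
    have r2: "R1b + R2 \<le> I_X2_Y_X1 ?P" using order.trans[OF b2 i_b2] by (simp only: ereal_less_eq)
    have "R1' ?q ?P \<le> ereal (I_X1_YX2 ?P)" unfolding R1'_def
      by (rule INF_lower) (rule self_L1[OF p3])
    hence r1: "R1a \<le> I_X1_YX2 ?P" using ereal_trans[OF b1] by blast
    have "R1 + R2 \<le> I_X12_Y ?P"
      using c
    proof
      assume c1: "ereal R1a \<le> R1'' ?q ?P (R1b + R2)"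
      have "R1'' ?q ?P (R1b + R2) \<le> ereal (I_X1_Y ?P + max 0 (I_X2_Y_X1 ?P - (R1b + R2)))"
        unfolding R1''_def by (rule INF_lower) (rule self_L0[OF p3])
      hence "R1a \<le> I_X1_Y ?P + max 0 (I_X2_Y_X1 ?P - (R1b + R2))" using ereal_trans[OF c1] by blast
      thus ?thesis using r2 a chain1[of "joint PX W", OF nn] by simp
    next
      assume c2: "ereal (R1b + R2) \<le> R2'' ?q ?P R1a"
      have "R2'' ?q ?P R1a \<le> ereal (I_X2_Y ?P - I_X2_X1 ?P + max 0 (I_X1_YX2 ?P - R1a))"
        unfolding R2''_def by (rule INF_lower) (rule self_L0[OF p3])
      hence "R1b + R2 \<le> I_X2_Y ?P - I_X2_X1 ?P + max 0 (I_X1_YX2 ?P - R1a)" using ereal_trans[OF c2] by blast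
      thus ?thesis using r1 a chain2[of "joint PX W", OF nn] by simp
    qed
    thus "r \<in> matchset W PX" using a r2 rr by (simp add: matchset_def)
  next
    fix r assume r: "r \<in> matchset W PX"
    obtain R1 R2 where rr: "r = (R1, R2)" by (cases r)
    have a: "0 \<le> R1" "0 \<le> R2" "R2 \<le> I_X2_Y_X1 ?P" "R1 + R2 \<le> I_X12_Y ?P"
      using r rr by (auto simp: matchset_def)
    define R1b where "R1b = min R1 (I_X2_Y_X1 ?P - R2)"
    define R1a where "R1a = R1 - R1b"
    have ch: "I_X12_Y ?P = I_X1_Y ?P + I_X2_Y_X1 ?P" by (rule chain1[of "joint PX W", OF nn])
    have i0: "0 \<le> I_X1_Y ?P" by (rule X1_Y_nonneg[OF p3])
    have i1: "I_X1_Y ?P \<le> I_X1_YX2 ?P" by (rule X1_Y_le[of "joint PX W", OF nn])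
    have v: "0 \<le> R1a" "0 \<le> R1b" "R1 = R1a + R1b" "R1a \<le> I_X1_YX2 ?P" "R1b + R2 \<le> I_X2_Y_X1 ?P"
       "R1a \<le> I_X12_Y ?P - (R1b + R2)"
      using a ch i0 i1 by (auto simp: R1a_def R1b_def min_def)
    have "ereal R1a \<le> R1' ?q ?P" unfolding R1'_def le_INF_iff
      using v(4) lb1[OF px w] by (auto intro: order.trans)
    moreover have "ereal (R1b + R2) \<le> R2' ?q ?P" unfolding R2'_def le_INF_iff
      using v(5) lb2[OF px w] by (auto intro: order.trans)
    moreover have "ereal R1a \<le> R1'' ?q ?P (R1b + R2)" unfolding R1''_def le_INF_iff
    proof (intro ballI)
      fix f assume f: "f \<in> L0 ?q ?P"
      have fnn: "\<And>x1 x2 y. 0 \<le> f x1 x2 y"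
        using f by (auto simp: L0_def intro: pmf3_nn[OF Gq_pmf3])
      have "I_X12_Y ?P \<le> I_X12_Y f" by (rule lb0[OF px w f])
      thus "ereal R1a \<le> ereal (I_X1_Y f + max 0 (I_X2_Y_X1 f - (R1b + R2)))"
        using v(6) chain1[of f, OF fnn] by simp
    qed
    ultimately show "r \<in> Rbin_star ?q ?P" using a v rr unfolding Rbin_star_def by blast
  qed
qed



lemma lg_N: "0 \<le> a \<Longrightarrow> lg a 1 = a * ln a"
  by (auto simp: lg_def)

lemma N_convex: fixes a b u v :: real
  assumes "0 \<le> a" "0 \<le> b" "0 \<le> u" "0 \<le> v" "u + v = 1"
  shows "(u * a + v * b) * ln (u * a + v * b) \<le> u * (a * ln a) + v * (b * ln b)"
proof -
  have "lg (u * a + v * b) (u * 1 + v * 1) \<le> lg (u * a) (u * 1) + lg (v * b) (v * 1)"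
    by (rule lg_two) (use assms in \<open>auto simp: zero_less_mult_iff\<close>)
  thus ?thesis using assms by (simp only: lg_scale) (simp add: lg_N)
qed

definition D where "D f = (\<Sum>x1\<in>UNIV. \<Sum>y\<in>UNIV. lg (m13 f x1 y) (m1 f x1))"


lemma D_eq: assumes nn: "\<And>x1 x2 y. 0 \<le> f x1 x2 y" shows "D f = S13 f - S1 f"
proof -
  have le: "m13 f x1 y \<le> m1 f x1" for x1 y unfolding m1_13
    by (rule le_sumI[of "m13 f x1"]) (rule m13_nn[of f, OF nn])
  have t: "lg (m13 f x1 y) (m1 f x1) = m13 f x1 y * ln (m13 f x1 y) - m13 f x1 y * ln (m1 f x1)" for x1 y
  proof (cases "0 < m13 f x1 y")
    case True hence "0 < m1 f x1" using le[of x1 y] by linarith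
    thus ?thesis using True by (simp add: lg_def ln_divide_pos algebra_simps)
  next
    case False hence "m13 f x1 y = 0" using m13_nn[of f x1 y, OF nn] by linarith
    thus ?thesis by (simp add: lg_def)
  qed
  show ?thesis unfolding D_def t S13_def S1_def
    by (simp add: sum_subtractf sum_distrib_right[symmetric] m1_13[symmetric])
qed

definition LW where "LW W PX = (\<Sum>x1\<in>UNIV. \<Sum>x2\<in>UNIV. PX x1 x2 * cW W x1 x2)"

lemma A_form: assumes "is_pmf2 PX" "is_channel W"
  shows "I_X2_Y_X1 (joint PX W) = LW W PX - D (joint PX W)"
  using E3[of "joint PX W", OF joint_nn[OF assms]] D_eq[of "joint PX W", OF joint_nn[OF assms]] HF_joint[OF assms]
  by (simp add: S12_def m12_joint[OF assms(2)] LW_def)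

lemma B_form: assumes "is_pmf2 PX" "is_channel W"
  shows "I_X12_Y (joint PX W) = LW W PX - S3 (joint PX W)"
  using E1[of "joint PX W", OF joint_nn[OF assms]] HF_joint[OF assms]
  by (simp add: S12_def m12_joint[OF assms(2)] LW_def)

definition mix where "mix u Pa v Pb = (\<lambda>x1 x2. u * Pa x1 x2 + v * Pb x1 x2)"

lemma mix_pmf2: "is_pmf2 Pa \<Longrightarrow> is_pmf2 Pb \<Longrightarrow> 0 \<le> u \<Longrightarrow> 0 \<le> v \<Longrightarrow> u + v = 1 \<Longrightarrow> is_pmf2 (mix u Pa v Pb)"
  by (simp add: is_pmf2_def mix_def sum.distrib sum_distrib_left[symmetric])

lemma LW_mix: "LW W (mix u Pa v Pb) = u * LW W Pa + v * LW W Pb"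
  by (simp add: LW_def mix_def algebra_simps sum.distrib sum_distrib_left)

lemma m13_mix: "m13 (joint (mix u Pa v Pb) W) x1 y = u * m13 (joint Pa W) x1 y + v * m13 (joint Pb W) x1 y"
  by (simp add: m13_def joint_def mix_def algebra_simps sum.distrib sum_distrib_left)

lemma m1_mix: "m1 (joint (mix u Pa v Pb) W) x1 = u * m1 (joint Pa W) x1 + v * m1 (joint Pb W) x1"
  by (simp add: m1_13 m13_mix sum.distrib sum_distrib_left)

lemma m3_mix: "m3 (joint (mix u Pa v Pb) W) y = u * m3 (joint Pa W) y + v * m3 (joint Pb W) y"
  by (simp add: m3_13 m13_mix sum.distrib sum_distrib_left)

lemma S3_mix: assumes "is_pmf2 Pa" "is_pmf2 Pb" "is_channel W" "0 \<le> u" "0 \<le> v" "u + v = 1"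
  shows "S3 (joint (mix u Pa v Pb) W) \<le> u * S3 (joint Pa W) + v * S3 (joint Pb W)"
proof -
  have nn: "0 \<le> m3 (joint Pa W) y" "0 \<le> m3 (joint Pb W) y" for y
    using joint_nn[OF assms(1,3)] joint_nn[OF assms(2,3)] by (auto simp: m3_def intro!: sum_nonneg)
  show ?thesis unfolding S3_def m3_mix sum_distrib_left sum.distrib[symmetric]
    by (intro sum_mono N_convex) (use nn assms in auto)
qed

lemma D_mix: assumes "is_pmf2 Pa" "is_pmf2 Pb" "is_channel W" "0 \<le> u" "0 \<le> v" "u + v = 1"
  shows "D (joint (mix u Pa v Pb) W) \<le> u * D (joint Pa W) + v * D (joint Pb W)"
proof -
  have na: "\<And>x1 x2 y. 0 \<le> joint Pa W x1 x2 y" and nb: "\<And>x1 x2 y. 0 \<le> joint Pb W x1 x2 y"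
    using joint_nn[OF assms(1,3)] joint_nn[OF assms(2,3)] by auto
  have lea: "m13 (joint Pa W) x1 y \<le> m1 (joint Pa W) x1" for x1 y unfolding m1_13
    by (rule le_sumI[of "m13 _ x1"]) (rule m13_nn[of "joint Pa W", OF na])
  have leb: "m13 (joint Pb W) x1 y \<le> m1 (joint Pb W) x1" for x1 y unfolding m1_13
    by (rule le_sumI[of "m13 _ x1"]) (rule m13_nn[of "joint Pb W", OF nb])
  have m1n: "0 \<le> u * m1 (joint Pa W) x1" "0 \<le> v * m1 (joint Pb W) x1" for x1
    using assms na nb by (simp_all add: m1_def sum_nonneg)
  have "lg (u * m13 (joint Pa W) x1 y + v * m13 (joint Pb W) x1 y) (u * m1 (joint Pa W) x1 + v * m1 (joint Pb W) x1)
     \<le> lg (u * m13 (joint Pa W) x1 y) (u * m1 (joint Pa W) x1) + lg (v * m13 (joint Pb W) x1 y) (v * m1 (joint Pb W) x1)" for x1 y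
  proof (rule lg_two)
    show "0 < u * m13 (joint Pa W) x1 y \<Longrightarrow> 0 < u * m1 (joint Pa W) x1"
      using lea[of x1 y] assms(4) by (simp add: zero_less_mult_iff)
    show "0 < v * m13 (joint Pb W) x1 y \<Longrightarrow> 0 < v * m1 (joint Pb W) x1"
      using leb[of x1 y] assms(5) by (simp add: zero_less_mult_iff)
  qed (use assms m13_nn[of "joint Pa W" x1 y, OF na] m13_nn[of "joint Pb W" x1 y, OF nb] m1n in simp_all)
  hence "lg (u * m13 (joint Pa W) x1 y + v * m13 (joint Pb W) x1 y) (u * m1 (joint Pa W) x1 + v * m1 (joint Pb W) x1)
     \<le> u * lg (m13 (joint Pa W) x1 y) (m1 (joint Pa W) x1) + v * lg (m13 (joint Pb W) x1 y) (m1 (joint Pb W) x1)" for x1 y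
    using assms by (simp add: lg_scale)
  thus ?thesis unfolding D_def m13_mix m1_mix sum_distrib_left sum.distrib[symmetric]
    by (intro sum_mono) auto
qed

lemma matchset_convex_comb:
  assumes w: "is_channel W" and pa: "is_pmf2 Pa" and pb: "is_pmf2 Pb"
    and x: "x \<in> matchset W Pa" and y: "y \<in> matchset W Pb"
    and u: "0 \<le> u" "0 \<le> v" "u + v = 1"
  shows "u *\<^sub>R x + v *\<^sub>R y \<in> matchset W (mix u Pa v Pb)"
proof -
  obtain a1 a2 where xa: "x = (a1, a2)" by (cases x)
  obtain b1 b2 where yb: "y = (b1, b2)" by (cases y)
  have pm: "is_pmf2 (mix u Pa v Pb)" by (rule mix_pmf2[OF pa pb u])
  have ha: "0 \<le> a1" "0 \<le> a2" "a2 \<le> LW W Pa - D (joint Pa W)" "a1 + a2 \<le> LW W Pa - S3 (joint Pa W)"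
    using x xa A_form[OF pa w] B_form[OF pa w] by (auto simp: matchset_def)
  have hb: "0 \<le> b1" "0 \<le> b2" "b2 \<le> LW W Pb - D (joint Pb W)" "b1 + b2 \<le> LW W Pb - S3 (joint Pb W)"
    using y yb A_form[OF pb w] B_form[OF pb w] by (auto simp: matchset_def)
  have d: "D (joint (mix u Pa v Pb) W) \<le> u * D (joint Pa W) + v * D (joint Pb W)" by (rule D_mix[OF pa pb w u])
  have s: "S3 (joint (mix u Pa v Pb) W) \<le> u * S3 (joint Pa W) + v * S3 (joint Pb W)" by (rule S3_mix[OF pa pb w u])
  have "u * a2 \<le> u * (LW W Pa - D (joint Pa W))" "v * b2 \<le> v * (LW W Pb - D (joint Pb W))"
    "u * (a1 + a2) \<le> u * (LW W Pa - S3 (joint Pa W))" "v * (b1 + b2) \<le> v * (LW W Pb - S3 (joint Pb W))"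
    using ha hb u by (auto intro: mult_left_mono)
  hence "u * a2 + v * b2 \<le> I_X2_Y_X1 (joint (mix u Pa v Pb) W)"
    "(u * a1 + v * b1) + (u * a2 + v * b2) \<le> I_X12_Y (joint (mix u Pa v Pb) W)"
    using d s A_form[OF pm w] B_form[OF pm w] LW_mix[of W u Pa v Pb] by (simp_all add: algebra_simps)
  moreover have "0 \<le> u * a1 + v * b1" "0 \<le> u * a2 + v * b2" using ha hb u by auto
  ultimately show ?thesis using xa yb by (simp add: matchset_def)
qed

lemma R_match_convex: assumes w: "is_channel W" shows "convex (R_match W)"
proof (rule convexI)
  fix x y and u v :: real
  assume x: "x \<in> R_match W" and y: "y \<in> R_match W" and u: "0 \<le> u" "0 \<le> v" "u + v = 1"
  from x obtain Pa where pa: "is_pmf2 Pa" "x \<in> matchset W Pa" unfolding R_match_alt by auto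
  from y obtain Pb where pb: "is_pmf2 Pb" "y \<in> matchset W Pb" unfolding R_match_alt by auto
  show "u *\<^sub>R x + v *\<^sub>R y \<in> R_match W" unfolding R_match_alt
    using matchset_convex_comb[OF w pa(1) pb(1) pa(2) pb(2) u] mix_pmf2[OF pa(1) pb(1) u] by blast
qed



definition pv :: "real^('a::finite \<times> 'b::finite) \<Rightarrow> 'a \<Rightarrow> 'b \<Rightarrow> real" where
  "pv v = (\<lambda>x1 x2. v $ (x1, x2))"

lemma pv_apply: "pv v x1 x2 = v $ (x1, x2)" by (simp add: pv_def)

definition mc13 :: "('a::finite \<Rightarrow> 'b::finite \<Rightarrow> 'c::finite \<Rightarrow> real) \<Rightarrow> real^('a \<times> 'b) \<Rightarrow> 'a \<Rightarrow> 'c \<Rightarrow> real" where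
  "mc13 W v x1 y = (\<Sum>x2\<in>UNIV. v $ (x1, x2) * W x1 x2 y)"

definition Ac :: "('a::finite \<Rightarrow> 'b::finite \<Rightarrow> 'c::finite \<Rightarrow> real) \<Rightarrow> real^('a \<times> 'b) \<Rightarrow> real" where
  "Ac W v = (\<Sum>x1\<in>UNIV. \<Sum>x2\<in>UNIV. v $ (x1, x2) * cW W x1 x2)
     - ((\<Sum>x1\<in>UNIV. \<Sum>y\<in>UNIV. ent (mc13 W v x1 y)) - (\<Sum>x1\<in>UNIV. ent (\<Sum>y\<in>UNIV. mc13 W v x1 y)))"

definition Bc :: "('a::finite \<Rightarrow> 'b::finite \<Rightarrow> 'c::finite \<Rightarrow> real) \<Rightarrow> real^('a \<times> 'b) \<Rightarrow> real" where
  "Bc W v = (\<Sum>x1\<in>UNIV. \<Sum>x2\<in>UNIV. v $ (x1, x2) * cW W x1 x2)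
     - (\<Sum>y\<in>UNIV. ent (\<Sum>x1\<in>UNIV. mc13 W v x1 y))"

lemma cont_Ac: "continuous_on S (Ac W)"
  unfolding Ac_def mc13_def by (intro continuous_intros)

lemma cont_Bc: "continuous_on S (Bc W)"
  unfolding Bc_def mc13_def by (intro continuous_intros)

lemma cont_Ac'[continuous_intros]: "continuous_on S f \<Longrightarrow> continuous_on S (\<lambda>x. Ac W (f x))"
  by (rule continuous_on_compose2[OF cont_Ac[of UNIV W]]) auto

lemma cont_Bc'[continuous_intros]: "continuous_on S f \<Longrightarrow> continuous_on S (\<lambda>x. Bc W (f x))"
  by (rule continuous_on_compose2[OF cont_Bc[of UNIV W]]) auto

lemma m13_joint_pv: "m13 (joint (pv v) W) = mc13 W v"
  by (intro ext) (simp add: m13_def joint_def pv_def mc13_def)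

lemma A_c: assumes "is_pmf2 (pv v)" "is_channel W"
  shows "I_X2_Y_X1 (joint (pv v) W) = Ac W v"
proof -
  have nn: "\<And>x1 x2 y. 0 \<le> joint (pv v) W x1 x2 y" by (rule joint_nn[OF assms])
  have n13: "0 \<le> mc13 W v x1 y" for x1 y using m13_nn[of "joint (pv v) W" x1 y, OF nn] by (simp add: m13_joint_pv)
  have n1: "0 \<le> (\<Sum>y\<in>UNIV. mc13 W v x1 y)" for x1 using n13 by (simp add: sum_nonneg)
  show ?thesis
    unfolding A_form[OF assms] D_eq[of "joint (pv v) W", OF nn] Ac_def
    by (simp add: LW_def pv_apply S13_def S1_def m1_13 m13_joint_pv ent_eq n13 n1)
qed

lemma B_c: assumes "is_pmf2 (pv v)" "is_channel W"
  shows "I_X12_Y (joint (pv v) W) = Bc W v"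
proof -
  have nn: "\<And>x1 x2 y. 0 \<le> joint (pv v) W x1 x2 y" by (rule joint_nn[OF assms])
  have n13: "0 \<le> mc13 W v x1 y" for x1 y using m13_nn[of "joint (pv v) W" x1 y, OF nn] by (simp add: m13_joint_pv)
  have n3: "0 \<le> (\<Sum>x1\<in>UNIV. mc13 W v x1 y)" for y using n13 by (simp add: sum_nonneg)
  show ?thesis
    unfolding B_form[OF assms] Bc_def
    by (simp add: LW_def pv_apply S3_def m3_13 m13_joint_pv ent_eq n3)
qed

definition Pm :: "(real^('a::finite \<times> 'b::finite)) set" where
  "Pm = {v. (\<forall>i. 0 \<le> v $ i) \<and> (\<Sum>i\<in>UNIV. v $ i) = 1}"

lemma pmf2_pv: "is_pmf2 (pv v) \<longleftrightarrow> v \<in> Pm"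
proof -
  have "(\<forall>i. 0 \<le> v $ i) \<longleftrightarrow> (\<forall>a b. 0 \<le> v $ (a, b))" by (metis prod.collapse)
  moreover have "(\<Sum>i\<in>UNIV. v $ i) = (\<Sum>a\<in>UNIV. \<Sum>b\<in>UNIV. v $ (a, b))" by (rule sum_UNIV_prod)
  ultimately show ?thesis unfolding is_pmf2_def Pm_def pv_def by simp
qed

lemma pv_vec: "pv (\<chi> i. PX (fst i) (snd i)) = PX"
  by (simp add: pv_def)

lemma closed_Pm: "closed (Pm :: (real^('a::finite \<times> 'b::finite)) set)"
  unfolding Pm_def
  by (intro closed_Collect_conj closed_Collect_all closed_Collect_le closed_Collect_eq continuous_intros)

lemma compact_Pm: "compact (Pm :: (real^('a::finite \<times> 'b::finite)) set)"
proof -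
  have "Pm \<subseteq> cbox 0 (1::real^('a \<times> 'b))"
  proof
    fix v :: "real^('a \<times> 'b)" assume v: "v \<in> Pm"
    have "v $ i \<le> 1" for i
    proof -
      have "v $ i \<le> (\<Sum>j\<in>UNIV. v $ j)" by (rule le_sumI) (use v in \<open>unfold Pm_def, blast\<close>)
      thus ?thesis using v by (simp add: Pm_def)
    qed
    thus "v \<in> cbox 0 1" using v by (simp add: mem_box_cart Pm_def)
  qed
  hence "cbox 0 1 \<inter> Pm = (Pm :: (real^('a \<times> 'b)) set)" by (rule Int_absorb1)
  thus ?thesis using compact_Int_closed[OF compact_cbox[of 0 "1::real^('a \<times> 'b)"] closed_Pm] by simp
qed

definition KK :: "('a::finite \<Rightarrow> 'b::finite \<Rightarrow> 'c::finite \<Rightarrow> real) \<Rightarrow> ((real^('a \<times> 'b)) \<times> (real \<times> real)) set" where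
  "KK W = {p. fst p \<in> Pm \<and> 0 \<le> fst (snd p) \<and> 0 \<le> snd (snd p) \<and>
     snd (snd p) \<le> Ac W (fst p) \<and> fst (snd p) + snd (snd p) \<le> Bc W (fst p)}"

lemma closed_KK: "closed (KK W)"
proof -
  have e: "KK W = (Pm \<times> UNIV) \<inter> ({p. 0 \<le> fst (snd p)} \<inter> {p. 0 \<le> snd (snd p)} \<inter>
     {p. snd (snd p) \<le> Ac W (fst p)} \<inter> {p. fst (snd p) + snd (snd p) \<le> Bc W (fst p)})"
    by (auto simp: KK_def mem_Times_iff)
  have c0: "closed ((Pm :: (real^('a \<times> 'b)) set) \<times> (UNIV :: (real \<times> real) set))"
    by (intro closed_Times closed_Pm closed_UNIV)
  have c1: "closed {p :: (real^('a \<times> 'b)) \<times> (real \<times> real). 0 \<le> fst (snd p)}"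
    by (rule closed_Collect_le) (intro continuous_intros)+
  have c2: "closed {p :: (real^('a \<times> 'b)) \<times> (real \<times> real). 0 \<le> snd (snd p)}"
    by (rule closed_Collect_le) (intro continuous_intros)+
  have c3: "closed {p :: (real^('a \<times> 'b)) \<times> (real \<times> real). snd (snd p) \<le> Ac W (fst p)}"
    by (rule closed_Collect_le) (intro continuous_intros)+
  have c4: "closed {p :: (real^('a \<times> 'b)) \<times> (real \<times> real). fst (snd p) + snd (snd p) \<le> Bc W (fst p)}"
    by (rule closed_Collect_le) (intro continuous_intros)+
  show ?thesis unfolding e by (intro closed_Int c0 c1 c2 c3 c4)
qed

lemma compact_KK: "compact (KK W)"
proof -
  have "compact (Bc W ` Pm)" by (intro compact_continuous_image cont_Bc compact_Pm)
  then obtain M where M: "\<And>x. x \<in> Bc W ` Pm \<Longrightarrow> norm x \<le> M"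
    using compact_imp_bounded bounded_pos by metis
  have "KK W \<subseteq> Pm \<times> (cbox 0 M \<times> cbox 0 M)"
  proof
    fix p assume p: "p \<in> KK W"
    hence "fst p \<in> Pm" by (simp add: KK_def)
    hence "norm (Bc W (fst p)) \<le> M" using M by blast
    thus "p \<in> Pm \<times> (cbox 0 M \<times> cbox 0 M)" using p
      by (cases p) (auto simp: KK_def cbox_interval)
  qed
  hence "KK W = (Pm \<times> (cbox 0 M \<times> cbox 0 M)) \<inter> KK W" by blast
  moreover have "compact (Pm \<times> (cbox 0 M \<times> cbox 0 M))"
    by (intro compact_Times compact_Pm compact_cbox)
  ultimately show ?thesis using compact_Int_closed closed_KK by metis
qed

lemma R_match_KK: assumes w: "is_channel W" shows "R_match W = snd ` KK W"
proof (intro equalityI subsetI)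
  fix r assume "r \<in> R_match W"
  then obtain PX where px: "is_pmf2 PX" "r \<in> matchset W PX" unfolding R_match_alt by auto
  define v :: "real^('a \<times> 'b)" where "v = (\<chi> i. PX (fst i) (snd i))"
  have pv: "pv v = PX" unfolding v_def by (rule pv_vec)
  have "v \<in> Pm" using px(1) pmf2_pv[of v] pv by simp
  moreover have "(v, r) \<in> KK W" using px pv calculation A_c[of v W] B_c[of v W] w
    by (cases r) (auto simp: KK_def matchset_def)
  ultimately show "r \<in> snd ` KK W" by force
next
  fix r assume "r \<in> snd ` KK W"
  then obtain v where vr: "(v, r) \<in> KK W" by force
  hence "v \<in> Pm" by (simp add: KK_def)
  hence pm: "is_pmf2 (pv v)" by (simp only: pmf2_pv)
  have "r \<in> matchset W (pv v)" using vr A_c[OF pm w] B_c[OF pm w]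
    by (cases r) (auto simp: KK_def matchset_def)
  thus "r \<in> R_match W" unfolding R_match_alt using pm by blast
qed

lemma R_match_closed: assumes w: "is_channel W" shows "closed (R_match W)"
  unfolding R_match_KK[OF w]
  by (intro compact_imp_closed compact_continuous_image compact_KK continuous_intros)


theorem proposition1:
  fixes W :: "'a::finite \<Rightarrow> 'b::finite \<Rightarrow> 'c::finite \<Rightarrow> real"
  assumes "is_channel W"
  shows "R_sup (qmatch W) W = R_bin (qmatch W) W \<and> R_bin (qmatch W) W = R_match W"
proof -
  have u1: "(\<Union>PX\<in>{PX. is_pmf2 PX}. Rsup_tilde (qmatch W) (joint PX W)) = R_match W"
    unfolding R_match_alt using sup_eq[OF _ assms] by simp
  have u2: "(\<Union>PX\<in>{PX. is_pmf2 PX}. Rbin_star (qmatch W) (joint PX W)) = R_match W"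
    unfolding R_match_alt using bin_eq[OF _ assms] by simp
  have cc: "closure (convex hull R_match W) = R_match W"
    using convex_hull_eq[of "R_match W"] R_match_convex[OF assms] closure_closed R_match_closed[OF assms]
    by simp
  have "R_sup (qmatch W) W = R_match W" unfolding R_sup_def u1 cc ..
  moreover have "R_bin (qmatch W) W = R_match W" unfolding R_bin_def u2 cc ..
  ultimately show ?thesis by simp
qed

end
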